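(* Let $k\ge0$ be an integer and $a,b,d\in\mathbb{C}$ generic. Put $p=\tfrac14-\tfrac k2+\tfrac b2$, $q=\tfrac14-\tfrac k2-\tfrac b2$, and define the polynomial of degree $3k$ in $n$ $$Q_k^{(3)}(n;a;b;d)=\frac{4^k}{(\tfrac12+b)_k(\tfrac12-b)_k}\sum_{j=0}^k\frac{(-n)_j(\tfrac n2+\tfrac a2)_j(-k)_j(-\tfrac n2-\tfrac a2-\tfrac12+d)_j}{j!\,(d)_j}\,\bigl(p-\tfrac n2+j\bigr)_{k-j}\bigl(q-\tfrac n2+j\bigr)_{k-j}.$$ Then, near $x=0$, $${}_4F_3\!\left[\begin{matrix}\tfrac a3,\ \tfrac13+\tfrac a3,\ \tfrac23+\tfrac a3,\ k+d\\ \tfrac34+\tfrac k2+\tfrac a2+\tfrac b2,\ \tfrac34+\tfrac k2+\tfrac a2-\tfrac b2,\ d\end{matrix}\,\Big|\,-\frac{27x}{(1-4x)^3}\right]=(1-4x)^a\sum_{n=0}^\infty\frac{(a)_n(\tfrac12-k-b)_n(\tfrac12-k+b)_n}{n!\,(\tfrac34+\tfrac k2+\tfrac a2+\tfrac b2)_n(\tfrac34+\tfrac k2+\tfrac a2-\tfrac b2)_n}\,Q_k^{(3)}(n;a;b;d)\,x^n.$$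
   Context: $(c)_n$ denotes the Pochhammer symbol, $(c)_0=1$; ${}_pF_q$ is the generalized hypergeometric series. Parameters are assumed generic so that no lower parameter is a nonpositive integer and $(\tfrac12\pm b)_k\neq0$. *)

theory Defs
  imports "HOL-Analysis.Analysis"
begin

definition hyp_term :: "complex list \<Rightarrow> complex list \<Rightarrow> complex \<Rightarrow> nat \<Rightarrow> complex" where
  "hyp_term as bs z n =
     (\<Prod>a\<leftarrow>as. pochhammer a n) / (\<Prod>b\<leftarrow>bs. pochhammer b n) * z ^ n / fact n"

definition hypergeom :: "complex list \<Rightarrow> complex list \<Rightarrow> complex \<Rightarrow> complex" where
  "hypergeom as bs z = (\<Sum>n. hyp_term as bs z n)"

definition Q3 :: "nat \<Rightarrow> nat \<Rightarrow> complex \<Rightarrow> complex \<Rightarrow> complex \<Rightarrow> complex" where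
  "Q3 k n a b d =
    (let p = 1/4 - of_nat k / 2 + b / 2; q = 1/4 - of_nat k / 2 - b / 2; m = of_nat n :: complex in
     4 ^ k / (pochhammer (1/2 + b) k * pochhammer (1/2 - b) k) *
     (\<Sum>j=0..k. pochhammer (- m) j * pochhammer (m/2 + a/2) j * pochhammer (- of_nat k) j
                 * pochhammer (- m/2 - a/2 - 1/2 + d) j / (fact j * pochhammer d j)
               * pochhammer (p - m/2 + of_nat j) (k - j) * pochhammer (q - m/2 + of_nat j) (k - j)))"

end

theory Submission
  imports Defs
begin


lemma continuous_on_pochhammer [continuous_intros]:
  fixes f :: "'a::topological_space \<Rightarrow> 'b::real_normed_field"
  shows "continuous_on S f \<Longrightarrow> continuous_on S (\<lambda>x. pochhammer (f x) n)"
  by (induction n) (auto simp: pochhammer_Suc intro!: continuous_intros)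

lemma ext_finite:
  fixes f g :: "complex \<Rightarrow> complex"
  assumes "continuous_on UNIV f" "continuous_on UNIV g" "finite S" "\<And>x. x \<notin> S \<Longrightarrow> f x = g x"
  shows "f x = g x"
proof -
  have f: "(f \<longlongrightarrow> f x) (at x)" using assms(1) by (simp add: continuous_on_def)
  have g: "(g \<longlongrightarrow> g x) (at x)" using assms(2) by (simp add: continuous_on_def)
  have ev: "eventually (\<lambda>y. y \<notin> S) (at x)"
    using islimpt_finite[OF assms(3), of x] by (simp add: islimpt_iff_eventually)
  have "eventually (\<lambda>y. g y = f y) (at x)"
    using ev by eventually_elim (use assms(4) in auto)
  hence fg: "(f \<longlongrightarrow> g x) (at x)" using g tendsto_cong by blast
  show ?thesis by (rule tendsto_unique[OF _ f fg]) simp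
qed

lemma poch_negnat:
  assumes "m \<le> N"
  shows "pochhammer (- of_nat N :: complex) m = (-1)^m * fact N / fact (N - m)"
proof -
  have "fact N = (fact (N-m) :: complex) * pochhammer (1 + of_nat (N - m)) (N - (N - m))"
    using pochhammer_product[of "N-m" N "1::complex"] by (simp add: pochhammer_fact)
  also have "N - (N - m) = m" using assms by simp
  finally have e: "fact N = (fact (N-m) :: complex) * pochhammer (1 + of_nat (N - m)) m" .
  have "pochhammer (- of_nat N :: complex) m = (-1)^m * pochhammer (of_nat N - of_nat m + 1) m"
    by (rule pochhammer_minus)
  also have "of_nat N - of_nat m + 1 = 1 + (of_nat (N - m) :: complex)" using assms by (simp add: of_nat_diff)
  finally show ?thesis using e by simp
qed

lemma vdm:
  fixes A C :: complex
  assumes "\<And>i. i < n \<Longrightarrow> C \<noteq> - of_nat i"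
  shows "(\<Sum>l\<le>n. pochhammer (- of_nat n) l * pochhammer A l / (fact l * pochhammer C l))
           = pochhammer (C - A) n / pochhammer C n"
  using Vandermonde_pochhammer[of n C A] assms by (simp add: atLeast0AtMost mult.commute)

lemma saal:
  fixes A B C D :: complex
  assumes C: "\<And>i. i < n \<Longrightarrow> C \<noteq> - of_nat i" and D: "\<And>i. i < n \<Longrightarrow> D \<noteq> - of_nat i"
    and bal: "D = 1 + A + B - C - of_nat n"
  shows "(\<Sum>l\<le>n. pochhammer (- of_nat n) l * pochhammer A l * pochhammer B l
             / (fact l * pochhammer C l * pochhammer D l))
       = pochhammer (C - A) n * pochhammer (D - A) n / (pochhammer C n * pochhammer D n)"
proof -
  define Q where "Q l i = pochhammer (- of_nat l) i * pochhammer (D - B) i / (fact i * pochhammer D i)" for l i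
  define P where "P l = pochhammer (- of_nat n) l * pochhammer A l / (fact l * pochhammer C l)" for l
  have V1: "pochhammer B l / pochhammer D l = (\<Sum>i\<le>n. Q l i)" if "l \<le> n" for l
  proof -
    have "(\<Sum>i\<le>l. Q l i) = pochhammer (D - (D-B)) l / pochhammer D l"
      unfolding Q_def by (rule vdm) (use D that in auto)
    moreover have "(\<Sum>i\<le>n. Q l i) = (\<Sum>i\<le>l. Q l i)"
      by (rule sum.mono_neutral_right) (use that in \<open>auto simp: Q_def pochhammer_of_nat_eq_0_iff\<close>)
    ultimately show ?thesis by simp
  qed
  have inner: "(\<Sum>l\<le>n. P l * pochhammer (- of_nat l) i) =
      (-1)^i * pochhammer (- of_nat n) i * pochhammer A i * pochhammer (C - A) (n - i) / pochhammer C n"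
    if i: "i \<le> n" for i
  proof -
    have "(\<Sum>l\<le>n. P l * pochhammer (- of_nat l) i) = (\<Sum>l\<in>{i..n}. P l * pochhammer (- of_nat l) i)"
      by (rule sum.mono_neutral_right) (auto simp: pochhammer_of_nat_eq_0_iff)
    also have "\<dots> = (\<Sum>r\<in>{0..n-i}. P (r + i) * pochhammer (- of_nat (r + i)) i)"
      using sum.shift_bounds_cl_nat_ivl[of "\<lambda>l. P l * pochhammer (- of_nat l) i" 0 i "n - i"] i by simp
    also have "\<dots> = (\<Sum>r\<le>n-i. ((-1)^i * pochhammer (- of_nat n) i * pochhammer A i / pochhammer C i) *
              (pochhammer (- of_nat (n - i)) r * pochhammer (A + of_nat i) r / (fact r * pochhammer (C + of_nat i) r)))"
    proof (rule sum.cong)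
      fix r assume r: "r \<in> {..n-i}"
      have e1: "pochhammer (- of_nat n :: complex) (i + r) = pochhammer (- of_nat n) i * pochhammer (- of_nat (n - i)) r"
        using pochhammer_product'[of "- of_nat n :: complex" i r] i by (simp add: of_nat_diff)
      have e2: "pochhammer (- of_nat (r + i) :: complex) i = (-1)^i * fact (r + i) / fact r"
        using poch_negnat[of i "r + i"] by simp
      have e3: "pochhammer A (i + r) = pochhammer A i * pochhammer (A + of_nat i) r"
        by (rule pochhammer_product')
      have e4: "pochhammer C (i + r) = pochhammer C i * pochhammer (C + of_nat i) r"
        by (rule pochhammer_product')
      have f: "fact (r + i) \<noteq> (0::complex)" "fact r \<noteq> (0::complex)" by auto
      show "P (r + i) * pochhammer (- of_nat (r + i)) i = ((-1)^i * pochhammer (- of_nat n) i * pochhammer A i / pochhammer C i) *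
              (pochhammer (- of_nat (n - i)) r * pochhammer (A + of_nat i) r / (fact r * pochhammer (C + of_nat i) r))"
        unfolding P_def e2 using e1 e3 e4 f by (simp add: add.commute field_simps)
    qed (simp add: atLeast0AtMost)
    also have "\<dots> = ((-1)^i * pochhammer (- of_nat n) i * pochhammer A i / pochhammer C i) *
         (pochhammer (C + of_nat i - (A + of_nat i)) (n - i) / pochhammer (C + of_nat i) (n - i))"
    proof (subst sum_distrib_left[symmetric], subst vdm)
      fix ia assume ia: "ia < n - i"
      hence "i + ia < n" using i by simp
      hence "C \<noteq> - of_nat (i + ia)" by (rule C)
      show "C + of_nat i \<noteq> - of_nat ia"
      proof
        assume h: "C + of_nat i = - of_nat ia"
        have "C = (C + of_nat i) - of_nat i" by simp
        also have "\<dots> = - of_nat (i + ia)" using h by simp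
        finally show False using \<open>C \<noteq> - of_nat (i + ia)\<close> by simp
      qed
    qed simp
    also have "pochhammer C i * pochhammer (C + of_nat i) (n - i) = pochhammer C n"
      using pochhammer_product[of i n C] i by simp
    hence "((-1)^i * pochhammer (- of_nat n) i * pochhammer A i / pochhammer C i) *
         (pochhammer (C + of_nat i - (A + of_nat i)) (n - i) / pochhammer (C + of_nat i) (n - i))
        = (-1)^i * pochhammer (- of_nat n) i * pochhammer A i * pochhammer (C - A) (n - i) / pochhammer C n"
      by (simp add: field_simps)
    finally show ?thesis .
  qed
  have "(\<Sum>l\<le>n. pochhammer (- of_nat n) l * pochhammer A l * pochhammer B l
             / (fact l * pochhammer C l * pochhammer D l)) = (\<Sum>l\<le>n. P l * (pochhammer B l / pochhammer D l))"
    by (rule sum.cong) (auto simp: P_def)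
  also have "\<dots> = (\<Sum>l\<le>n. \<Sum>i\<le>n. P l * Q l i)"
    by (rule sum.cong) (auto simp: V1 sum_distrib_left)
  also have "\<dots> = (\<Sum>i\<le>n. \<Sum>l\<le>n. P l * Q l i)" by (rule sum.swap)
  also have "\<dots> = (\<Sum>i\<le>n. pochhammer (D - B) i / (fact i * pochhammer D i) * (\<Sum>l\<le>n. P l * pochhammer (- of_nat l) i))"
    by (rule sum.cong[OF refl]) (simp add: Q_def sum_distrib_left sum_divide_distrib mult_ac)
  also have "\<dots> = (\<Sum>i\<le>n. pochhammer (C - A) n / pochhammer C n * (pochhammer (- of_nat n) i * pochhammer A i / (fact i * pochhammer D i)))"
  proof (rule sum.cong)
    fix i assume i: "i \<in> {..n}"
    have "pochhammer (- (C - A + of_nat n - 1)) i = (-1)^i * pochhammer (C - A + of_nat n - 1 - of_nat i + 1) i"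
      by (rule pochhammer_minus)
    moreover have "- (C - A + of_nat n - 1) = D - B" using bal by simp
    moreover have "C - A + of_nat n - 1 - of_nat i + 1 = C - A + of_nat (n - i)" using i by (simp add: of_nat_diff)
    ultimately have "pochhammer (D - B) i = (-1)^i * pochhammer (C - A + of_nat (n - i)) i" by simp
    hence "pochhammer (D - B) i * (-1)^i * pochhammer (C - A) (n - i) = pochhammer (C - A) n"
      using pochhammer_product'[of "C - A" "n - i" i] i by (simp add: mult_ac)
    thus "pochhammer (D - B) i / (fact i * pochhammer D i) * (\<Sum>l\<le>n. P l * pochhammer (- of_nat l) i) =
      pochhammer (C - A) n / pochhammer C n * (pochhammer (- of_nat n) i * pochhammer A i / (fact i * pochhammer D i))"
      using inner[of i] i by (auto simp: field_simps)
  qed simp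
  also have "\<dots> = pochhammer (C - A) n / pochhammer C n * (pochhammer (D - A) n / pochhammer D n)"
    by (subst sum_distrib_left[symmetric], subst vdm) (use D in auto)
  finally show ?thesis by simp
qed




lemma inner_id:
  fixes d x :: complex
  assumes dg: "\<And>i. d \<noteq> - of_nat i"
  shows "pochhammer x m * pochhammer (d + of_nat k) m / (pochhammer d m * fact m)
    = (\<Sum>j\<le>m. pochhammer (d - x) j * pochhammer (- of_nat k) j * pochhammer (x + of_nat k) (m - j)
          / (fact j * fact (m - j) * pochhammer d j))"
proof (rule ext_finite[where f = "\<lambda>x. pochhammer x m * pochhammer (d + of_nat k) m / (pochhammer d m * fact m)"
      and g = "\<lambda>x. (\<Sum>j\<le>m. pochhammer (d - x) j * pochhammer (- of_nat k) j * pochhammer (x + of_nat k) (m - j)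
          / (fact j * fact (m - j) * pochhammer d j))"
      and S = "(\<lambda>i. 1 - of_nat k - of_nat m + of_nat i) ` {..<m} \<union> (\<lambda>i. - of_nat i - of_nat k) ` {..<m}"])
  show "continuous_on UNIV (\<lambda>x. pochhammer x m * pochhammer (d + of_nat k) m / (pochhammer d m * fact m))"
    using dg by (intro continuous_intros) (auto simp: pochhammer_eq_0_iff)
  show "continuous_on UNIV (\<lambda>x. (\<Sum>j\<le>m. pochhammer (d - x) j * pochhammer (- of_nat k) j * pochhammer (x + of_nat k) (m - j)
          / (fact j * fact (m - j) * pochhammer d j)))"
    using dg by (intro continuous_intros) (auto simp: pochhammer_eq_0_iff)
  show "finite ((\<lambda>i. 1 - of_nat k - of_nat m + of_nat i) ` {..<m} \<union> (\<lambda>i. - of_nat i - of_nat k :: complex) ` {..<m})"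
    by simp
next
  fix x :: complex
  assume xS: "x \<notin> (\<lambda>i. 1 - of_nat k - of_nat m + of_nat i) ` {..<m} \<union> (\<lambda>i. - of_nat i - of_nat k) ` {..<m}"
  define D where "D = 1 - x - of_nat k - of_nat m"
  have Dg: "D \<noteq> - of_nat i" if "i < m" for i
  proof
    assume "D = - of_nat i"
    hence "x = 1 - of_nat k - of_nat m + of_nat i" unfolding D_def by (simp add: algebra_simps)
    thus False using xS that by auto
  qed
  have xk: "pochhammer (x + of_nat k) m \<noteq> 0"
  proof
    assume "pochhammer (x + of_nat k) m = 0"
    then obtain i where "i < m" and h: "x + of_nat k = - of_nat i" by (auto simp: pochhammer_eq_0_iff)
    have "x = - of_nat i - of_nat k" using add_implies_diff[OF h] by simp
    hence "x \<in> (\<lambda>i. - of_nat i - of_nat k) ` {..<m}" using \<open>i < m\<close> by blast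
    thus False using xS by blast
  qed
  have dm: "pochhammer d m \<noteq> 0" using dg by (auto simp: pochhammer_eq_0_iff)
  have S: "(\<Sum>j\<le>m. pochhammer (- of_nat m) j * pochhammer (d - x) j * pochhammer (- of_nat k) j
             / (fact j * pochhammer d j * pochhammer D j))
       = pochhammer (d - (d - x)) m * pochhammer (D - (d - x)) m / (pochhammer d m * pochhammer D m)"
    by (rule saal) (use dg Dg in \<open>auto simp: D_def\<close>)
  have e1: "pochhammer (D - (d - x)) m = (-1)^m * pochhammer (d + of_nat k) m"
  proof -
    have h1: "D - (d - x) = - (d + of_nat k + of_nat m - 1)" by (simp add: D_def algebra_simps)
    have h2: "pochhammer (- (d + of_nat k + of_nat m - 1)) m = (-1)^m * pochhammer (d + of_nat k) m"
      using pochhammer_minus[of "d + of_nat k + of_nat m - 1" m] by simp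
    show ?thesis unfolding h1 by (rule h2)
  qed
  have eD: "pochhammer D j = (-1)^j * pochhammer (x + of_nat k + of_nat (m - j)) j" if "j \<le> m" for j
  proof -
    have h1: "D = - (x + of_nat k + of_nat m - 1)" by (simp add: D_def algebra_simps)
    have h3: "x + of_nat k + of_nat m - 1 - of_nat j + 1 = x + of_nat k + of_nat (m - j)" using that by (simp add: of_nat_diff)
    have h2: "pochhammer (- (x + of_nat k + of_nat m - 1)) j = (-1)^j * pochhammer (x + of_nat k + of_nat (m - j)) j"
      using pochhammer_minus[of "x + of_nat k + of_nat m - 1" j] unfolding h3 .
    show ?thesis unfolding h1 by (rule h2)
  qed
  have Dm: "pochhammer D m = (-1)^m * pochhammer (x + of_nat k) m" using eD[of m] by simp
  have tm: "pochhammer (d - x) j * pochhammer (- of_nat k) j * pochhammer (x + of_nat k) (m - j)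
          / (fact j * fact (m - j) * pochhammer d j) =
        pochhammer (x + of_nat k) m / fact m * (pochhammer (- of_nat m) j * pochhammer (d - x) j * pochhammer (- of_nat k) j
             / (fact j * pochhammer d j * pochhammer D j))" if j: "j \<le> m" for j
  proof -
    have p: "pochhammer (x + of_nat k) m = pochhammer (x + of_nat k) (m - j) * pochhammer (x + of_nat k + of_nat (m - j)) j"
      using pochhammer_product'[of "x + of_nat k" "m - j" j] j by simp
    have nz: "pochhammer (x + of_nat k + of_nat (m - j)) j \<noteq> 0" using xk p by auto
    have neg: "pochhammer (- of_nat m :: complex) j = (-1)^j * fact m / fact (m - j)" by (rule poch_negnat[OF j])
    have s: "((-1::complex)^j) * (-1)^j = 1" by (simp flip: power_mult_distrib)
    show ?thesis unfolding eD[OF j] neg p using nz s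
      by (simp add: field_simps)
  qed
  have "(\<Sum>j\<le>m. pochhammer (d - x) j * pochhammer (- of_nat k) j * pochhammer (x + of_nat k) (m - j)
          / (fact j * fact (m - j) * pochhammer d j)) =
       pochhammer (x + of_nat k) m / fact m * (\<Sum>j\<le>m. pochhammer (- of_nat m) j * pochhammer (d - x) j * pochhammer (- of_nat k) j
             / (fact j * pochhammer d j * pochhammer D j))"
    by (simp add: tm sum_distrib_left)
  also have "\<dots> = pochhammer x m * pochhammer (d + of_nat k) m / (pochhammer d m * fact m)"
    unfolding S e1 Dm using xk dm by (simp add: field_simps)
  finally show "pochhammer x m * pochhammer (d + of_nat k) m / (pochhammer d m * fact m) =
     (\<Sum>j\<le>m. pochhammer (d - x) j * pochhammer (- of_nat k) j * pochhammer (x + of_nat k) (m - j)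
          / (fact j * fact (m - j) * pochhammer d j))" by simp
qed




lemma whip:
  fixes \<alpha> \<beta> E F d :: complex
  assumes Eg: "\<And>i. E \<noteq> - of_nat i" and Fg: "\<And>i. F \<noteq> - of_nat i" and dg: "\<And>i. d \<noteq> - of_nat i"
    and bal: "E + F = 1 + \<alpha> + \<beta> + of_nat k - of_nat N"
  shows "(\<Sum>m\<le>N. pochhammer (- of_nat N) m * pochhammer \<alpha> m * pochhammer \<beta> m * pochhammer (d + of_nat k) m
            / (fact m * pochhammer E m * pochhammer F m * pochhammer d m))
   = (\<Sum>j\<le>N. pochhammer (d - \<beta>) j * pochhammer (- of_nat k) j * pochhammer (- of_nat N) j * pochhammer \<alpha> j
            / (fact j * pochhammer d j) * pochhammer (E - \<alpha>) (N - j) * pochhammer (F - \<alpha>) (N - j))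
     / (pochhammer E N * pochhammer F N)"
proof -
  have Ep: "pochhammer E n \<noteq> 0" for n using Eg by (auto simp: pochhammer_eq_0_iff)
  have Fp: "pochhammer F n \<noteq> 0" for n using Fg by (auto simp: pochhammer_eq_0_iff)
  have dp: "pochhammer d n \<noteq> 0" for n using dg by (auto simp: pochhammer_eq_0_iff)
  define h where "h j l = pochhammer (- of_nat N) (j+l) * pochhammer \<alpha> (j+l) / (pochhammer E (j+l) * pochhammer F (j+l))
      * (pochhammer (d - \<beta>) j * pochhammer (- of_nat k) j * pochhammer (\<beta> + of_nat k) l / (fact j * fact l * pochhammer d j))" for j l
  have "(\<Sum>m\<le>N. pochhammer (- of_nat N) m * pochhammer \<alpha> m * pochhammer \<beta> m * pochhammer (d + of_nat k) m
            / (fact m * pochhammer E m * pochhammer F m * pochhammer d m))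
      = (\<Sum>m\<le>N. pochhammer (- of_nat N) m * pochhammer \<alpha> m / (pochhammer E m * pochhammer F m)
            * (pochhammer \<beta> m * pochhammer (d + of_nat k) m / (pochhammer d m * fact m)))"
    by (rule sum.cong[OF refl]) (simp add: divide_inverse mult_ac)
  also have "\<dots> = (\<Sum>m\<le>N. \<Sum>j\<le>m. h j (m - j))"
    by (rule sum.cong[OF refl]) (simp add: inner_id[OF dg] h_def sum_distrib_left)
  also have "\<dots> = (\<Sum>(j,l)\<in>{(j,l). j + l \<le> N}. h j l)"
    by (rule sum.triangle_reindex_eq[symmetric])
  also have "{(j,l). j + l \<le> N} = Sigma {..N} (\<lambda>j. {..N-j})" by auto
  also have "(\<Sum>(j,l)\<in>Sigma {..N} (\<lambda>j. {..N-j}). h j l) = (\<Sum>j\<le>N. \<Sum>l\<le>N-j. h j l)"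
    by (rule sum.Sigma[symmetric]) auto
  also have "\<dots> = (\<Sum>j\<le>N. (pochhammer (d - \<beta>) j * pochhammer (- of_nat k) j * pochhammer (- of_nat N) j * pochhammer \<alpha> j
            / (fact j * pochhammer d j) * pochhammer (E - \<alpha>) (N - j) * pochhammer (F - \<alpha>) (N - j))
     / (pochhammer E N * pochhammer F N))"
  proof (rule sum.cong[OF refl])
    fix j assume j: "j \<in> {..N}"
    hence jN: "j \<le> N" by simp
    define K where "K = pochhammer (d - \<beta>) j * pochhammer (- of_nat k) j * pochhammer (- of_nat N) j * pochhammer \<alpha> j
            / (fact j * pochhammer d j * pochhammer E j * pochhammer F j)"
    have hj: "h j l = K * (pochhammer (- of_nat (N - j)) l * pochhammer (\<alpha> + of_nat j) l * pochhammer (\<beta> + of_nat k) l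
            / (fact l * pochhammer (E + of_nat j) l * pochhammer (F + of_nat j) l))" for l
    proof -
      have e1: "pochhammer (- of_nat N :: complex) (j + l) = pochhammer (- of_nat N) j * pochhammer (- of_nat (N - j)) l"
        using pochhammer_product'[of "- of_nat N :: complex" j l] jN by (simp add: of_nat_diff)
      show ?thesis unfolding h_def K_def e1 pochhammer_product'[of \<alpha>] pochhammer_product'[of E] pochhammer_product'[of F]
        using Ep Fp dp by (simp add: field_simps)
    qed
    have S: "(\<Sum>l\<le>N-j. pochhammer (- of_nat (N - j)) l * pochhammer (\<alpha> + of_nat j) l * pochhammer (\<beta> + of_nat k) l
            / (fact l * pochhammer (E + of_nat j) l * pochhammer (F + of_nat j) l))
        = pochhammer (E + of_nat j - (\<alpha> + of_nat j)) (N - j) * pochhammer (F + of_nat j - (\<alpha> + of_nat j)) (N - j)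
          / (pochhammer (E + of_nat j) (N - j) * pochhammer (F + of_nat j) (N - j))"
    proof (rule saal)
      fix i
      show "E + of_nat j \<noteq> - of_nat i" using Eg[of "j + i"] by (auto simp: algebra_simps)
      show "F + of_nat j \<noteq> - of_nat i" using Fg[of "j + i"] by (auto simp: algebra_simps)
    next
      show "F + of_nat j = 1 + (\<alpha> + of_nat j) + (\<beta> + of_nat k) - (E + of_nat j) - of_nat (N - j)"
        using bal jN by (simp add: of_nat_diff algebra_simps)
    qed
    have pE: "pochhammer E N = pochhammer E j * pochhammer (E + of_nat j) (N - j)"
      using pochhammer_product[of j N E] jN by simp
    have pF: "pochhammer F N = pochhammer F j * pochhammer (F + of_nat j) (N - j)"
      using pochhammer_product[of j N F] jN by simp
    have "(\<Sum>l\<le>N-j. h j l) = K * (pochhammer (E - \<alpha>) (N - j) * pochhammer (F - \<alpha>) (N - j)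
          / (pochhammer (E + of_nat j) (N - j) * pochhammer (F + of_nat j) (N - j)))"
      unfolding hj sum_distrib_left[symmetric] S by simp
    also have "\<dots> = (pochhammer (d - \<beta>) j * pochhammer (- of_nat k) j * pochhammer (- of_nat N) j * pochhammer \<alpha> j
            / (fact j * pochhammer d j) * pochhammer (E - \<alpha>) (N - j) * pochhammer (F - \<alpha>) (N - j))
     / (pochhammer E N * pochhammer F N)"
      unfolding K_def pE pF using Ep Fp dp by (simp add: field_simps)
    finally show "(\<Sum>l\<le>N-j. h j l) = \<dots>" .
  qed
  also have "\<dots> = (\<Sum>j\<le>N. pochhammer (d - \<beta>) j * pochhammer (- of_nat k) j * pochhammer (- of_nat N) j * pochhammer \<alpha> j
            / (fact j * pochhammer d j) * pochhammer (E - \<alpha>) (N - j) * pochhammer (F - \<alpha>) (N - j))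
     / (pochhammer E N * pochhammer F N)"
    by (rule sum_divide_distrib[symmetric])
  finally show ?thesis .
qed




lemma helper1:
  fixes C' z C w t P A \<alpha> B u :: complex
  assumes "C' * z = C * w"
  shows "z * t * (4 * P * (A * \<alpha>) * (B * u) * C') = 4 * (P * A * B * C) * \<alpha> * u * w * t"
proof -
  have "z * t * (4 * P * (A * \<alpha>) * (B * u) * C') = 4 * P * A * \<alpha> * B * u * t * (C' * z)" by (simp add: mult_ac)
  also have "\<dots> = 4 * P * A * \<alpha> * B * u * t * (C * w)" unfolding assms ..
  finally show ?thesis by (simp add: mult_ac)
qed

lemma helper2:
  fixes E' z E e1 e2 H' t H h1 K D w2 G \<alpha> u w :: complex
  assumes "E' * z = E * e1 * e2" "H' * t = H * h1" "e1 * e2 = 4 * u * t" "h1 = \<alpha>" "w2 = w"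
  shows "4 * (K * D * E * G * H) * \<alpha> * u * w * t = z * t * (K * (D * w2) * E' * G * H')"
proof -
  have "z * t * (K * (D * w2) * E' * G * H') = K * D * w2 * G * (E' * z) * (H' * t)" by (simp add: mult_ac)
  also have "\<dots> = K * D * w2 * G * (E * e1 * e2) * (H * h1)" unfolding assms(1,2) ..
  also have "\<dots> = K * D * w2 * G * E * (e1 * e2) * (H * h1)" by (simp add: mult_ac)
  also have "\<dots> = K * D * w2 * G * E * (4 * u * t) * (H * \<alpha>)" unfolding assms(3,4) ..
  also have "\<dots> = 4 * (K * D * E * G * H) * \<alpha> * u * w * t" unfolding assms(5) by (simp add: mult_ac)
  finally show ?thesis by (rule sym)
qed

lemma tprime:
  fixes y :: complex
  assumes jk: "j \<le> k" and jN: "j \<le> N"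
  shows "4^N * pochhammer (y + of_nat k + 1/2) (N - j) * pochhammer (y + of_nat j) (N - j) * pochhammer (2*y + of_nat N) (2*k)
   = 4^k * pochhammer (2*y + 2* of_nat k) N * pochhammer (2*y + of_nat N) N * pochhammer (y + of_nat j) (k - j)
       * pochhammer (y + of_nat N + 1/2) (k - j)"
proof -
  define L where "L N y = 4^N * pochhammer (y + of_nat k + 1/2) (N - j) * pochhammer (y + of_nat j) (N - j) * pochhammer (2*y + of_nat N) (2*k)" for N and y :: complex
  define R where "R N y = 4^k * pochhammer (2*y + 2* of_nat k) N * pochhammer (2*y + of_nat N) N * pochhammer (y + of_nat j) (k - j)
       * pochhammer (y + of_nat N + 1/2) (k - j)" for N and y :: complex
  have "\<forall>y. L (j + n) y = R (j + n) y" for n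
  proof (induction n)
    case 0
    show ?case
    proof
      fix y :: complex
      have d: "pochhammer (2 * (y + of_nat j)) (2 * (k - j)) = of_nat (2^(2*(k-j))) * pochhammer (y + of_nat j) (k - j) * pochhammer (y + of_nat j + 1/2) (k - j)"
        by (rule pochhammer_double)
      have p1: "pochhammer (2*y + of_nat j) (2*k - j) = pochhammer (2*y + of_nat j) j * pochhammer (2 * (y + of_nat j)) (2 * (k - j))"
        using pochhammer_product'[of "2*y + of_nat j" j "2*(k-j)"] jk by (simp add: algebra_simps)
      have p2: "pochhammer (2*y + of_nat j) (2*k) = pochhammer (2*y + of_nat j) (2*k - j) * pochhammer (2*y + 2 * of_nat k) j"
        using pochhammer_product'[of "2*y + of_nat j" "2*k - j" j] jk by (simp add: of_nat_diff algebra_simps)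
      have q: "(4::complex)^k = 4^j * 4^(k-j)" using jk by (simp flip: power_add)
      have q2: "(of_nat (2^(2*(k-j))) :: complex) = 4^(k-j)" by (simp add: power_mult)
      show "L (j + 0) y = R (j + 0) y"
        unfolding L_def R_def using d p1 p2 q q2 by (simp add: algebra_simps)
    qed
  next
    case (Suc n)
    define M where "M = j + n"
    have IH: "L M y = R M y" for y using Suc unfolding M_def by blast
    have MS: "j + Suc n = Suc M" by (simp add: M_def)
    show ?case unfolding MS
    proof
      fix y :: complex
      show "L (Suc M) y = R (Suc M) y"
      proof (rule ext_finite[where f = "L (Suc M)" and g = "R (Suc M)" and S = "{- of_nat M / 2, - of_nat M - 1/2}"])
        show "continuous_on UNIV (L (Suc M))" unfolding L_def by (intro continuous_intros)
        show "continuous_on UNIV (R (Suc M))" unfolding R_def by (intro continuous_intros)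
      next
        fix y :: complex assume yS: "y \<notin> {- of_nat M / 2, - of_nat M - 1/2}"
        have nz1: "2*y + of_nat M \<noteq> 0"
        proof
          assume h: "2*y + of_nat M = 0"
          have "y = ((2*y + of_nat M) - of_nat M) / 2" by simp
          also have "\<dots> = - of_nat M / 2" using h by simp
          finally show False using yS by simp
        qed
        have nz2: "y + of_nat M + 1/2 \<noteq> 0"
        proof
          assume h: "y + of_nat M + 1/2 = 0"
          have "y = (y + of_nat M + 1/2) - of_nat M - 1/2" by simp
          also have "\<dots> = - of_nat M - 1/2" using h by simp
          finally show False using yS by simp
        qed
        have jM: "j \<le> M" by (simp add: M_def)
        have SM: "Suc M - j = Suc (M - j)" using jM by simp
        have a: "pochhammer (y + of_nat k + 1/2) (Suc M - j) = pochhammer (y + of_nat k + 1/2) (M - j) * (y + of_nat k + 1/2 + of_nat (M - j))"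
          unfolding SM by (rule pochhammer_Suc)
        have b: "pochhammer (y + of_nat j) (Suc M - j) = pochhammer (y + of_nat j) (M - j) * (y + of_nat M)"
          unfolding SM pochhammer_Suc using jM by (simp add: of_nat_diff)
        have c: "pochhammer (2*y + of_nat (Suc M)) (2*k) * (2*y + of_nat M) = pochhammer (2*y + of_nat M) (2*k) * (2*y + of_nat M + 2 * of_nat k)"
          using pochhammer_rec[of "2*y + of_nat M" "2*k"] pochhammer_Suc[of "2*y + of_nat M" "2*k"]
          by (simp add: algebra_simps)
        have dd: "pochhammer (2*y + 2* of_nat k) (Suc M) = pochhammer (2*y + 2* of_nat k) M * (2*y + 2* of_nat k + of_nat M)"
          by (rule pochhammer_Suc)
        have e: "pochhammer (2*y + of_nat (Suc M)) (Suc M) * (2*y + of_nat M) = pochhammer (2*y + of_nat M) M * (2*y + 2* of_nat M) * (2*y + 2* of_nat M + 1)"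
          using pochhammer_rec[of "2*y + of_nat M" "Suc M"] pochhammer_Suc[of "2*y + of_nat M" "Suc M"] pochhammer_Suc[of "2*y + of_nat M" M]
          by (simp add: algebra_simps)
        have f: "pochhammer (y + of_nat (Suc M) + 1/2) (k - j) * (y + of_nat M + 1/2) = pochhammer (y + of_nat M + 1/2) (k - j) * (y + of_nat M + 1/2 + of_nat (k - j))"
          using pochhammer_rec[of "y + of_nat M + 1/2" "k - j"] pochhammer_Suc[of "y + of_nat M + 1/2" "k - j"]
          by (simp add: algebra_simps)
        have kj: "of_nat (k - j) = (of_nat k - of_nat j :: complex)" "of_nat (M - j) = (of_nat M - of_nat j :: complex)"
          using jk jM by (simp_all add: of_nat_diff)
        have LS: "L (Suc M) y = 4 * 4^M * (pochhammer (y + of_nat k + 1/2) (M - j) * (y + of_nat k + 1/2 + of_nat (M - j)))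
             * (pochhammer (y + of_nat j) (M - j) * (y + of_nat M)) * pochhammer (2*y + of_nat (Suc M)) (2*k)"
          unfolding L_def a b by (simp only: power_Suc)
        have "(2*y + of_nat M) * (y + of_nat M + 1/2) * L (Suc M) y = 4 * L M y * (y + of_nat k + 1/2 + of_nat (M - j)) * (y + of_nat M) * (2*y + of_nat M + 2 * of_nat k) * (y + of_nat M + 1/2)"
          unfolding LS L_def[of M y] by (rule helper1[OF c])
        also have "\<dots> = 4 * R M y * (y + of_nat k + 1/2 + of_nat (M - j)) * (y + of_nat M) * (2*y + of_nat M + 2 * of_nat k) * (y + of_nat M + 1/2)"
          by (simp add: IH)
        also have "\<dots> = (2*y + of_nat M) * (y + of_nat M + 1/2) * R (Suc M) y"
          unfolding R_def dd
          by (rule helper2[OF e f]) (simp_all add: kj algebra_simps)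
        finally show "L (Suc M) y = R (Suc M) y" using nz1 nz2 by simp
      qed simp
    qed
  qed
  from this[of "N - j"] jN show ?thesis unfolding L_def R_def by simp
qed




lemma tword:
  fixes b :: complex
  assumes jk: "j \<le> k" and jN: "j \<le> N"
  shows "4^N * pochhammer (3/4 + of_nat k/2 + b/2 - of_nat N/2) (N - j) * pochhammer (3/4 + of_nat k/2 - b/2 - of_nat N/2) (N - j)
        * pochhammer (1/2 + b) k * pochhammer (1/2 - b) k
    = 4^k * pochhammer (1/2 - of_nat k - b) N * pochhammer (1/2 - of_nat k + b) N
        * pochhammer ((1/4 - of_nat k/2 + b/2) - of_nat N/2 + of_nat j) (k - j)
        * pochhammer ((1/4 - of_nat k/2 - b/2) - of_nat N/2 + of_nat j) (k - j)"
proof -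
  define y where "y = 1/4 - of_nat k/2 + b/2 - of_nat N/2"
  have r1: "3/4 + of_nat k/2 + b/2 - of_nat N/2 = y + of_nat k + 1/2" by (simp add: y_def field_simps)
  have r2: "pochhammer (3/4 + of_nat k/2 - b/2 - of_nat N/2) (N - j) = (-1)^(N-j) * pochhammer (y + of_nat j) (N - j)"
  proof -
    have h1: "3/4 + of_nat k/2 - b/2 - of_nat N/2 = - (y + of_nat N - 1)" by (simp add: y_def field_simps)
    have h2: "y + of_nat N - 1 - of_nat (N - j) + 1 = y + of_nat j" using jN by (simp add: of_nat_diff)
    show ?thesis unfolding h1 using pochhammer_minus[of "y + of_nat N - 1" "N - j"] unfolding h2 .
  qed
  have r3: "1/2 + b = 2*y + of_nat N + of_nat k" by (simp add: y_def field_simps)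
  have r4: "pochhammer (1/2 - b) k = (-1)^k * pochhammer (2*y + of_nat N) k"
  proof -
    have h1: "1/2 - b = - (2*y + of_nat N + of_nat k - 1)" by (simp add: y_def field_simps)
    have h2: "2*y + of_nat N + of_nat k - 1 - of_nat k + 1 = 2*y + of_nat N" by simp
    show ?thesis unfolding h1 using pochhammer_minus[of "2*y + of_nat N + of_nat k - 1" k] unfolding h2 .
  qed
  have r5: "pochhammer (1/2 - of_nat k - b) N = (-1)^N * pochhammer (2*y + 2 * of_nat k) N"
  proof -
    have h1: "1/2 - of_nat k - b = - (2*y + 2 * of_nat k + of_nat N - 1)" by (simp add: y_def field_simps)
    have h2: "2*y + 2 * of_nat k + of_nat N - 1 - of_nat N + 1 = 2*y + 2 * of_nat k" by simp
    show ?thesis unfolding h1 using pochhammer_minus[of "2*y + 2 * of_nat k + of_nat N - 1" N] unfolding h2 .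
  qed
  have r6: "1/2 - of_nat k + b = 2*y + of_nat N" by (simp add: y_def field_simps)
  have r7: "(1/4 - of_nat k/2 + b/2) - of_nat N/2 + of_nat j = y + of_nat j" by (simp add: y_def field_simps)
  have r8: "pochhammer ((1/4 - of_nat k/2 - b/2) - of_nat N/2 + of_nat j) (k - j) = (-1)^(k-j) * pochhammer (y + of_nat N + 1/2) (k - j)"
  proof -
    have h1: "(1/4 - of_nat k/2 - b/2) - of_nat N/2 + of_nat j = - (y + of_nat N + of_nat k - of_nat j - 1/2)" by (simp add: y_def field_simps)
    have h2: "y + of_nat N + of_nat k - of_nat j - 1/2 - of_nat (k - j) + 1 = y + of_nat N + 1/2" using jk by (simp add: of_nat_diff)
    show ?thesis unfolding h1 using pochhammer_minus[of "y + of_nat N + of_nat k - of_nat j - 1/2" "k - j"] unfolding h2 .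
  qed
  have P2: "pochhammer (2*y + of_nat N) (2*k) = pochhammer (2*y + of_nat N) k * pochhammer (2*y + of_nat N + of_nat k) k"
    unfolding mult_2[of k] by (rule pochhammer_product')
  have T: "4^N * pochhammer (y + of_nat k + 1/2) (N - j) * pochhammer (y + of_nat j) (N - j) * pochhammer (2*y + of_nat N) (2*k)
   = 4^k * pochhammer (2*y + 2 * of_nat k) N * pochhammer (2*y + of_nat N) N * pochhammer (y + of_nat j) (k - j)
       * pochhammer (y + of_nat N + 1/2) (k - j)" by (rule tprime[OF jk jN])
  have sg: "((-1::complex)^(N-j) * (-1)^k) = (-1)^N * (-1)^(k-j)"
  proof -
    have e: "N - j + k = N + (k - j)" using jk jN by simp
    have "(-1::complex)^(N-j) * (-1)^k = (-1)^(N - j + k)" by (rule power_add[symmetric])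
    also have "\<dots> = (-1)^(N + (k - j))" by (simp only: e)
    also have "\<dots> = (-1)^N * (-1)^(k-j)" by (rule power_add)
    finally show ?thesis .
  qed
  have "4^N * pochhammer (3/4 + of_nat k/2 + b/2 - of_nat N/2) (N - j) * pochhammer (3/4 + of_nat k/2 - b/2 - of_nat N/2) (N - j)
        * pochhammer (1/2 + b) k * pochhammer (1/2 - b) k
      = ((-1)^(N-j) * (-1)^k) * (4^N * pochhammer (y + of_nat k + 1/2) (N - j) * pochhammer (y + of_nat j) (N - j) * pochhammer (2*y + of_nat N) (2*k))"
    unfolding r1 r2 r3 r4 P2 by (simp only: mult_ac)
  also have "\<dots> = ((-1)^N * (-1)^(k-j)) * (4^k * pochhammer (2*y + 2 * of_nat k) N * pochhammer (2*y + of_nat N) N * pochhammer (y + of_nat j) (k - j)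
       * pochhammer (y + of_nat N + 1/2) (k - j))" unfolding T sg ..
  also have "\<dots> = 4^k * pochhammer (1/2 - of_nat k - b) N * pochhammer (1/2 - of_nat k + b) N
        * pochhammer ((1/4 - of_nat k/2 + b/2) - of_nat N/2 + of_nat j) (k - j)
        * pochhammer ((1/4 - of_nat k/2 - b/2) - of_nat N/2 + of_nat j) (k - j)"
    unfolding r5 r6 r7 r8 by (simp only: mult_ac)
  finally show ?thesis .
qed




lemma trip:
  fixes a :: complex
  shows "pochhammer (a/3) m * pochhammer (1/3 + a/3) m * pochhammer (2/3 + a/3) m * 27^m = pochhammer a (3*m)"
proof (induction m)
  case 0 show ?case by simp
next
  case (Suc m)
  have e3: "pochhammer z 3 = z * (z + 1) * (z + 2)" for z :: complex
    by (simp add: numeral_3_eq_3 pochhammer_Suc algebra_simps)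
  have e': "pochhammer a (3*m + 3) = pochhammer a (3*m) * ((a + of_nat (3*m)) * (a + of_nat (3*m) + 1) * (a + of_nat (3*m) + 2))"
    using pochhammer_product'[of a "3*m" 3] by (simp only: e3)
  have s3: "3 * Suc m = 3*m + 3" by simp
  have e: "pochhammer a (3 * Suc m) = pochhammer a (3*m) * ((a + of_nat (3*m)) * (a + of_nat (3*m) + 1) * (a + of_nat (3*m) + 2))"
    unfolding s3 by (rule e')
  have f: "27 * (a/3 + of_nat m) * (1/3 + a/3 + of_nat m) * (2/3 + a/3 + of_nat m) = (a + of_nat (3*m)) * (a + of_nat (3*m) + 1) * (a + of_nat (3*m) + 2)"
    by (simp add: field_simps)
  have "pochhammer (a/3) (Suc m) * pochhammer (1/3 + a/3) (Suc m) * pochhammer (2/3 + a/3) (Suc m) * 27^(Suc m)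
     = (pochhammer (a/3) m * pochhammer (1/3 + a/3) m * pochhammer (2/3 + a/3) m * 27^m) * (27 * (a/3 + of_nat m) * (1/3 + a/3 + of_nat m) * (2/3 + a/3 + of_nat m))"
    by (simp add: pochhammer_Suc mult_ac)
  also have "\<dots> = pochhammer a (3 * Suc m)" unfolding Suc.IH f e ..
  finally show ?case .
qed

lemma ring3:
  fixes p1 p2 p3 p4 b1 b2 b3 f1 f2 u t y w :: complex
  shows "p1 * p2 * p3 * p4 / (b1 * b2 * b3) / f1 * (u * t) * (y * w / f2) = (p1 * p2 * p3 * t) * y * p4 * u * w / (b1 * b2 * b3 * f1 * f2)"
  by (simp add: divide_inverse mult_ac)

lemma coef:
  fixes a b d :: complex and k N :: nat
  defines "B1 \<equiv> 3/4 + of_nat k / 2 + a/2 + b/2" and "B2 \<equiv> 3/4 + of_nat k / 2 + a/2 - b/2"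
  assumes gen1: "\<And>m::nat. B1 \<noteq> - of_nat m" and gen2: "\<And>m::nat. B2 \<noteq> - of_nat m" and gen3: "\<And>m::nat. d \<noteq> - of_nat m"
    and gen4: "pochhammer (1/2 + b) k \<noteq> 0" and gen5: "pochhammer (1/2 - b) k \<noteq> 0"
  shows "(\<Sum>m\<le>N. pochhammer (a/3) m * pochhammer (1/3 + a/3) m * pochhammer (2/3 + a/3) m * pochhammer (of_nat k + d) m
            / (pochhammer B1 m * pochhammer B2 m * pochhammer d m) / fact m * (-27)^m
            * (pochhammer (a + of_nat (3*m)) (N - m) * 4^(N - m) / fact (N - m)))
    = pochhammer a N * pochhammer (1/2 - of_nat k - b) N * pochhammer (1/2 - of_nat k + b) N
        / (fact N * pochhammer B1 N * pochhammer B2 N) * Q3 k N a b d"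
proof -
  define \<alpha> where "\<alpha> = of_nat N / 2 + a / 2"
  define \<beta> where "\<beta> = of_nat N / 2 + a / 2 + 1/2"
  have B1p: "pochhammer B1 n \<noteq> 0" for n using gen1 by (auto simp: pochhammer_eq_0_iff)
  have B2p: "pochhammer B2 n \<noteq> 0" for n using gen2 by (auto simp: pochhammer_eq_0_iff)
  have dp: "pochhammer d n \<noteq> 0" for n using gen3 by (auto simp: pochhammer_eq_0_iff)
  define S where "S m = pochhammer (- of_nat N) m * pochhammer \<alpha> m * pochhammer \<beta> m * pochhammer (d + of_nat k) m
            / (fact m * pochhammer B1 m * pochhammer B2 m * pochhammer d m)" for m
  have step1: "pochhammer (a/3) m * pochhammer (1/3 + a/3) m * pochhammer (2/3 + a/3) m * pochhammer (of_nat k + d) m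
            / (pochhammer B1 m * pochhammer B2 m * pochhammer d m) / fact m * (-27)^m
            * (pochhammer (a + of_nat (3*m)) (N - m) * 4^(N - m) / fact (N - m))
          = pochhammer a N * 4^N / fact N * S m" if mN: "m \<le> N" for m
  proof -
    have h1: "(-27::complex)^m = (-1)^m * 27^m" by (simp flip: power_mult_distrib)
    have pa: "pochhammer a (3*m) * pochhammer (a + of_nat (3*m)) (N - m) = pochhammer a N * pochhammer (a + of_nat N) (2*m)"
    proof -
      have "pochhammer a (3*m) * pochhammer (a + of_nat (3*m)) (N - m) = pochhammer a (3*m + (N - m))"
        by (rule pochhammer_product'[symmetric])
      also have "3*m + (N - m) = N + 2*m" using mN by simp
      also have "pochhammer a (N + 2*m) = pochhammer a N * pochhammer (a + of_nat N) (2*m)"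
        by (rule pochhammer_product')
      finally show ?thesis .
    qed
    have dbl: "pochhammer (a + of_nat N) (2*m) = 4^m * pochhammer \<alpha> m * pochhammer \<beta> m"
    proof -
      have "pochhammer (2 * \<alpha>) (2*m) = of_nat (2^(2*m)) * pochhammer \<alpha> m * pochhammer (\<alpha> + 1/2) m"
        by (rule pochhammer_double)
      moreover have "2 * \<alpha> = a + of_nat N" by (simp add: \<alpha>_def field_simps)
      moreover have "\<alpha> + 1/2 = \<beta>" by (simp add: \<alpha>_def \<beta>_def)
      moreover have "(of_nat (2^(2*m)) :: complex) = 4^m" by (simp add: power_mult)
      ultimately show ?thesis by simp
    qed
    have neg: "pochhammer (- of_nat N :: complex) m = (-1)^m * fact N / fact (N - m)" by (rule poch_negnat[OF mN])
    have p4: "(4::complex)^m * 4^(N - m) = 4^N" using mN by (simp flip: power_add)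
    have tr: "pochhammer (a/3) m * pochhammer (1/3 + a/3) m * pochhammer (2/3 + a/3) m * 27^m = pochhammer a (3*m)" by (rule trip)
    have f1: "fact N \<noteq> (0::complex)" "fact m \<noteq> (0::complex)" "fact (N - m) \<noteq> (0::complex)" by auto
    have lhs: "pochhammer (a/3) m * pochhammer (1/3 + a/3) m * pochhammer (2/3 + a/3) m * pochhammer (of_nat k + d) m
            / (pochhammer B1 m * pochhammer B2 m * pochhammer d m) / fact m * (-27)^m
            * (pochhammer (a + of_nat (3*m)) (N - m) * 4^(N - m) / fact (N - m))
        = (pochhammer (a/3) m * pochhammer (1/3 + a/3) m * pochhammer (2/3 + a/3) m * 27^m) * pochhammer (a + of_nat (3*m)) (N - m)
           * pochhammer (of_nat k + d) m * (-1)^m * 4^(N - m) / (pochhammer B1 m * pochhammer B2 m * pochhammer d m * fact m * fact (N - m))"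
      unfolding h1 by (rule ring3)
    also have "\<dots> = pochhammer a N * (4^m * 4^(N - m)) * pochhammer \<alpha> m * pochhammer \<beta> m
           * pochhammer (of_nat k + d) m * (-1)^m / (pochhammer B1 m * pochhammer B2 m * pochhammer d m * fact m * fact (N - m))"
      unfolding tr pa dbl by (simp add: mult_ac)
    also have "\<dots> = pochhammer a N * 4^N / fact N * S m"
      unfolding p4 S_def neg using B1p B2p dp f1 by (simp add: field_simps add.commute)
    finally show ?thesis .
  qed
  have wh: "(\<Sum>m\<le>N. S m) = (\<Sum>j\<le>N. pochhammer (d - \<beta>) j * pochhammer (- of_nat k) j * pochhammer (- of_nat N) j * pochhammer \<alpha> j
            / (fact j * pochhammer d j) * pochhammer (B1 - \<alpha>) (N - j) * pochhammer (B2 - \<alpha>) (N - j))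
     / (pochhammer B1 N * pochhammer B2 N)"
    unfolding S_def by (rule whip[OF gen1 gen2 gen3]) (simp add: B1_def B2_def \<alpha>_def \<beta>_def field_simps)
  define X where "X j = pochhammer (- of_nat N) j * pochhammer \<alpha> j * pochhammer (- of_nat k) j * pochhammer (d - \<beta>) j / (fact j * pochhammer d j)" for j
  define c1 where "c1 = pochhammer (1/2 - of_nat k - b) N"
  define c2 where "c2 = pochhammer (1/2 - of_nat k + b) N"
  define P where "P = pochhammer (1/2 + b) k * pochhammer (1/2 - b) k"
  have Pnz: "P \<noteq> 0" using gen4 gen5 by (simp add: P_def)
  define Y where "Y j = pochhammer ((1/4 - of_nat k/2 + b/2) - of_nat N/2 + of_nat j) (k - j)
        * pochhammer ((1/4 - of_nat k/2 - b/2) - of_nat N/2 + of_nat j) (k - j)" for j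
  have Q3e: "Q3 k N a b d = 4^k / P * (\<Sum>j=0..k. X j * Y j)"
  proof -
    have db: "- of_nat N / 2 - a / 2 - 1 / 2 + d = d - \<beta>" by (simp add: \<beta>_def)
    show ?thesis unfolding Q3_def Let_def db P_def X_def Y_def \<alpha>_def[symmetric] by (simp add: mult_ac)
  qed
  have K: "4^N * (\<Sum>j\<le>N. pochhammer (d - \<beta>) j * pochhammer (- of_nat k) j * pochhammer (- of_nat N) j * pochhammer \<alpha> j
            / (fact j * pochhammer d j) * pochhammer (B1 - \<alpha>) (N - j) * pochhammer (B2 - \<alpha>) (N - j))
      = c1 * c2 * (4^k / P * (\<Sum>j=0..k. X j * Y j))"
  proof -
    have "4^N * (\<Sum>j\<le>N. pochhammer (d - \<beta>) j * pochhammer (- of_nat k) j * pochhammer (- of_nat N) j * pochhammer \<alpha> j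
            / (fact j * pochhammer d j) * pochhammer (B1 - \<alpha>) (N - j) * pochhammer (B2 - \<alpha>) (N - j))
        = (\<Sum>j\<le>N. X j * (4^N * pochhammer (B1 - \<alpha>) (N - j) * pochhammer (B2 - \<alpha>) (N - j)))"
      unfolding sum_distrib_left by (rule sum.cong[OF refl]) (simp add: X_def mult_ac)
    also have "\<dots> = (\<Sum>j\<le>N+k. X j * (4^N * pochhammer (B1 - \<alpha>) (N - j) * pochhammer (B2 - \<alpha>) (N - j)))"
      by (rule sum.mono_neutral_left) (auto simp: X_def pochhammer_of_nat_eq_0_iff)
    also have "\<dots> = (\<Sum>j\<le>N+k. X j * (c1 * c2 * 4^k / P * Y j))"
    proof (rule sum.cong[OF refl])
      fix j assume "j \<in> {..N+k}"
      show "X j * (4^N * pochhammer (B1 - \<alpha>) (N - j) * pochhammer (B2 - \<alpha>) (N - j)) = X j * (c1 * c2 * 4^k / P * Y j)"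
      proof (cases "j \<le> N \<and> j \<le> k")
        case True
        have e1: "B1 - \<alpha> = 3/4 + of_nat k/2 + b/2 - of_nat N/2" by (simp add: B1_def \<alpha>_def field_simps)
        have e2: "B2 - \<alpha> = 3/4 + of_nat k/2 - b/2 - of_nat N/2" by (simp add: B2_def \<alpha>_def field_simps)
        have tw: "4^N * pochhammer (B1 - \<alpha>) (N - j) * pochhammer (B2 - \<alpha>) (N - j) * P = c1 * c2 * 4^k * Y j"
          using tword[of j k N b] True unfolding e1 e2 P_def c1_def c2_def Y_def by (simp add: mult_ac)
        hence "4^N * pochhammer (B1 - \<alpha>) (N - j) * pochhammer (B2 - \<alpha>) (N - j) = c1 * c2 * 4^k / P * Y j"
          using Pnz by (simp add: field_simps)
        thus ?thesis by simp
      next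
        case False
        hence "X j = 0" by (auto simp: X_def pochhammer_of_nat_eq_0_iff)
        thus ?thesis by simp
      qed
    qed
    also have "\<dots> = (\<Sum>j=0..k. X j * (c1 * c2 * 4^k / P * Y j))"
      by (rule sum.mono_neutral_right) (auto simp: X_def pochhammer_of_nat_eq_0_iff)
    also have "\<dots> = c1 * c2 * (4^k / P * (\<Sum>j=0..k. X j * Y j))"
      unfolding sum_distrib_left by (rule sum.cong[OF refl]) (simp add: mult_ac)
    finally show ?thesis .
  qed
  have "(\<Sum>m\<le>N. pochhammer (a/3) m * pochhammer (1/3 + a/3) m * pochhammer (2/3 + a/3) m * pochhammer (of_nat k + d) m
            / (pochhammer B1 m * pochhammer B2 m * pochhammer d m) / fact m * (-27)^m
            * (pochhammer (a + of_nat (3*m)) (N - m) * 4^(N - m) / fact (N - m)))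
      = (\<Sum>m\<le>N. pochhammer a N * 4^N / fact N * S m)"
  proof (rule sum.cong[OF refl])
    fix m assume "m \<in> {..N}"
    thus "pochhammer (a/3) m * pochhammer (1/3 + a/3) m * pochhammer (2/3 + a/3) m * pochhammer (of_nat k + d) m
            / (pochhammer B1 m * pochhammer B2 m * pochhammer d m) / fact m * (-27)^m
            * (pochhammer (a + of_nat (3*m)) (N - m) * 4^(N - m) / fact (N - m)) = pochhammer a N * 4^N / fact N * S m"
      by (intro step1) simp
  qed
  also have "\<dots> = pochhammer a N / (fact N * pochhammer B1 N * pochhammer B2 N) * (4^N * (\<Sum>j\<le>N. pochhammer (d - \<beta>) j * pochhammer (- of_nat k) j * pochhammer (- of_nat N) j * pochhammer \<alpha> j
            / (fact j * pochhammer d j) * pochhammer (B1 - \<alpha>) (N - j) * pochhammer (B2 - \<alpha>) (N - j)))"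
    unfolding sum_distrib_left[symmetric] wh using B1p B2p by (simp add: field_simps)
  also have "\<dots> = pochhammer a N * pochhammer (1/2 - of_nat k - b) N * pochhammer (1/2 - of_nat k + b) N
        / (fact N * pochhammer B1 N * pochhammer B2 N) * Q3 k N a b d"
    unfolding K Q3e c1_def c2_def by (simp add: field_simps)
  finally show ?thesis .
qed




lemma poch_nonneg: "0 \<le> (x::real) \<Longrightarrow> 0 \<le> pochhammer x n"
  by (induction n) (auto simp: pochhammer_Suc)

lemma norm_poch_le: "norm (pochhammer (z::complex) n) \<le> pochhammer (norm z) n"
proof (induction n)
  case 0 show ?case by simp
next
  case (Suc n)
  have "norm (pochhammer z (Suc n)) = norm (pochhammer z n) * norm (z + of_nat n)"
    by (simp add: pochhammer_Suc norm_mult)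
  also have "\<dots> \<le> pochhammer (norm z) n * (norm z + of_nat n)"
  proof (rule mult_mono[OF Suc.IH])
    show "norm (z + of_nat n) \<le> norm z + of_nat n"
      using norm_triangle_ineq[of z "of_nat n"] by simp
  qed (auto intro: poch_nonneg)
  also have "\<dots> = pochhammer (norm z) (Suc n)" by (simp add: pochhammer_Suc)
  finally show ?case .
qed

lemma poch_mono_real:
  fixes u v :: real
  assumes "0 \<le> u" "u \<le> v"
  shows "pochhammer u n \<le> pochhammer v n"
proof (induction n)
  case 0 show ?case by simp
next
  case (Suc n)
  have "pochhammer u n * (u + of_nat n) \<le> pochhammer v n * (v + of_nat n)"
    by (rule mult_mono[OF Suc.IH]) (use assms in \<open>auto intro: poch_nonneg\<close>)
  thus ?case by (simp add: pochhammer_Suc)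
qed

lemma poch_nat_bound:
  assumes "1 \<le> c"
  shows "pochhammer (real c) i \<le> 2^(c+i) * fact i"
proof -
  have "real ((c + i - 1) choose i) = (of_nat (c + i - 1) gchoose i)" by (rule binomial_gbinomial)
  also have "\<dots> = pochhammer (of_nat (c + i - 1) - of_nat i + 1) i / fact i" by (rule gbinomial_pochhammer')
  also have "of_nat (c + i - 1) - of_nat i + 1 = (real c)" using assms by (simp add: of_nat_diff)
  finally have e: "pochhammer (real c) i = real ((c + i - 1) choose i) * fact i" by (simp add: field_simps)
  have "real ((c + i - 1) choose i) \<le> 2^(c + i - 1)"
    using binomial_le_pow2[of "c + i - 1" i] by (metis of_nat_le_iff of_nat_numeral of_nat_power)
  also have "(2::real)^(c + i - 1) \<le> 2^(c+i)" by (rule power_increasing) auto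
  finally show ?thesis unfolding e by (intro mult_right_mono) auto
qed

lemma lowbound:
  fixes l :: complex
  assumes "\<And>m. l \<noteq> - of_nat m"
  shows "\<exists>\<delta>>0. \<forall>m. \<delta> * (real m + 1) \<le> norm (l + of_nat m)"
proof -
  define M where "M = nat \<lceil>2 * norm l\<rceil> + 1"
  define F where "F = (\<lambda>m. norm (l + of_nat m) / (real m + 1)) ` {..M}"
  have Fpos: "\<forall>t\<in>F. t > 0"
  proof
    fix t assume "t \<in> F"
    then obtain m where t: "t = norm (l + of_nat m) / (real m + 1)" by (auto simp: F_def)
    have "l + of_nat m \<noteq> 0" using assms[of m] by (auto simp: add_eq_0_iff)
    thus "t > 0" unfolding t by simp
  qed
  have Fne: "F \<noteq> {}" "finite F" by (auto simp: F_def)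
  define \<delta> where "\<delta> = min (Min F) (1/4)"
  have "Min F > 0" using Fpos Fne by auto
  hence dpos: "\<delta> > 0" by (simp add: \<delta>_def)
  have "\<delta> * (real m + 1) \<le> norm (l + of_nat m)" for m
  proof (cases "m \<le> M")
    case True
    hence "norm (l + of_nat m) / (real m + 1) \<in> F" by (auto simp: F_def)
    hence "Min F \<le> norm (l + of_nat m) / (real m + 1)" using Fne by simp
    hence "\<delta> \<le> norm (l + of_nat m) / (real m + 1)" by (simp add: \<delta>_def)
    thus ?thesis by (simp add: field_simps)
  next
    case False
    hence m: "real m \<ge> 2 * norm l" "real m \<ge> 1" unfolding M_def by linarith+
    have "norm (of_nat m :: complex) \<le> norm (l + of_nat m) + norm (-l)"
      using norm_triangle_ineq[of "l + of_nat m" "-l"] by simp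
    hence "norm (of_nat m :: complex) - norm l \<le> norm (l + of_nat m)" by simp
    hence "real m - norm l \<le> norm (l + of_nat m)" by simp
    moreover have "\<delta> * (real m + 1) \<le> (1/4) * (real m + 1)"
      by (rule mult_right_mono) (auto simp: \<delta>_def)
    moreover have "1/4 * (real m + 1) \<le> real m - norm l"
    proof -
      have "1/4 * (real m + 1) = real m / 4 + 1/4" by simp
      thus ?thesis using m by linarith
    qed
    ultimately show ?thesis by linarith
  qed
  thus ?thesis using dpos by blast
qed

lemma ring4:
  fixes p1 p2 p3 p4 x1 x2 x3 x4 q1 q2 q3 y1 y2 y3 z f :: complex
  shows "(p1 * x1) * (p2 * x2) * (p3 * x3) * (p4 * x4) / ((q1 * y1) * (q2 * y2) * (q3 * y3)) / (z * f)
    = (p1 * p2 * p3 * p4 / (q1 * q2 * q3) / f) * (x1 * x2 * x3 * x4 / (y1 * y2 * y3 * z))"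
  by (simp add: divide_inverse mult_ac)

lemma T_bound:
  fixes u1 u2 u3 u4 l1 l2 l3 :: complex
  assumes g1: "\<And>m. l1 \<noteq> - of_nat m" and g2: "\<And>m. l2 \<noteq> - of_nat m" and g3: "\<And>m. l3 \<noteq> - of_nat m"
  shows "\<exists>K>0. \<forall>m. norm (pochhammer u1 m * pochhammer u2 m * pochhammer u3 m * pochhammer u4 m
             / (pochhammer l1 m * pochhammer l2 m * pochhammer l3 m) / fact m) \<le> K^m"
proof -
  obtain \<delta>1 where d1: "\<delta>1 > 0" "\<And>m. \<delta>1 * (real m + 1) \<le> norm (l1 + of_nat m)" using lowbound[OF g1] by blast
  obtain \<delta>2 where d2: "\<delta>2 > 0" "\<And>m. \<delta>2 * (real m + 1) \<le> norm (l2 + of_nat m)" using lowbound[OF g2] by blast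
  obtain \<delta>3 where d3: "\<delta>3 > 0" "\<And>m. \<delta>3 * (real m + 1) \<le> norm (l3 + of_nat m)" using lowbound[OF g3] by blast
  define C where "C = (norm u1 + 1) * (norm u2 + 1) * (norm u3 + 1) * (norm u4 + 1)"
  define K where "K = C / (\<delta>1 * \<delta>2 * \<delta>3)"
  have Cpos: "C > 0" unfolding C_def by (intro mult_pos_pos) (auto intro: add_nonneg_pos)
  have Kpos: "K > 0" unfolding K_def using Cpos d1 d2 d3 by simp
  have up: "norm (u + of_nat m) \<le> (norm u + 1) * (real m + 1)" for u :: complex and m
  proof -
    have "norm (u + of_nat m) \<le> norm u + real m" using norm_triangle_ineq[of u "of_nat m"] by simp
    also have "\<dots> \<le> (norm u + 1) * (real m + 1)" by (simp add: algebra_simps)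
    finally show ?thesis .
  qed
  have R: "norm ((u1 + of_nat m) * (u2 + of_nat m) * (u3 + of_nat m) * (u4 + of_nat m)
      / ((l1 + of_nat m) * (l2 + of_nat m) * (l3 + of_nat m) * (of_nat m + 1))) \<le> K" for m
  proof -
    define n1 where "n1 = real m + 1"
    have n1: "n1 > 0" by (simp add: n1_def)
    have num: "norm ((u1 + of_nat m) * (u2 + of_nat m) * (u3 + of_nat m) * (u4 + of_nat m)) \<le> C * n1^4"
    proof -
      have "norm ((u1 + of_nat m) * (u2 + of_nat m) * (u3 + of_nat m) * (u4 + of_nat m))
          = norm (u1 + of_nat m) * norm (u2 + of_nat m) * norm (u3 + of_nat m) * norm (u4 + of_nat m)"
        by (simp add: norm_mult)
      also have "\<dots> \<le> ((norm u1 + 1) * n1) * ((norm u2 + 1) * n1) * ((norm u3 + 1) * n1) * ((norm u4 + 1) * n1)"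
        unfolding n1_def by (intro mult_mono up) (auto intro!: mult_nonneg_nonneg)
      also have "\<dots> = C * n1^4" by (simp add: C_def power4_eq_xxxx mult_ac)
      finally show ?thesis .
    qed
    have den: "\<delta>1 * \<delta>2 * \<delta>3 * n1^4 \<le> norm ((l1 + of_nat m) * (l2 + of_nat m) * (l3 + of_nat m) * (of_nat m + 1))"
    proof -
      have "\<delta>1 * \<delta>2 * \<delta>3 * n1^4 = (\<delta>1 * n1) * (\<delta>2 * n1) * (\<delta>3 * n1) * n1" by (simp add: power4_eq_xxxx mult_ac)
      also have "\<dots> \<le> norm (l1 + of_nat m) * norm (l2 + of_nat m) * norm (l3 + of_nat m) * n1"
        unfolding n1_def using d1 d2 d3 by (intro mult_mono) (auto intro!: mult_nonneg_nonneg)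
      also have "\<dots> = norm ((l1 + of_nat m) * (l2 + of_nat m) * (l3 + of_nat m) * (of_nat m + 1))"
      proof -
        have "norm (of_nat m + 1 :: complex) = n1" unfolding n1_def
          by (metis norm_of_nat of_nat_Suc add.commute of_nat_1 of_nat_add)
        thus ?thesis by (simp add: norm_mult)
      qed
      finally show ?thesis .
    qed
    have dpos: "0 < \<delta>1 * \<delta>2 * \<delta>3 * n1^4" using d1 d2 d3 n1 by simp
    have "norm ((u1 + of_nat m) * (u2 + of_nat m) * (u3 + of_nat m) * (u4 + of_nat m)
      / ((l1 + of_nat m) * (l2 + of_nat m) * (l3 + of_nat m) * (of_nat m + 1)))
       = norm ((u1 + of_nat m) * (u2 + of_nat m) * (u3 + of_nat m) * (u4 + of_nat m))
      / norm ((l1 + of_nat m) * (l2 + of_nat m) * (l3 + of_nat m) * (of_nat m + 1))" by (rule norm_divide)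
    also have "\<dots> \<le> (C * n1^4) / (\<delta>1 * \<delta>2 * \<delta>3 * n1^4)"
      by (rule frac_le) (use num den dpos Cpos n1 in auto)
    also have "\<dots> = K" unfolding K_def using n1 by simp
    finally show ?thesis .
  qed
  have "norm (pochhammer u1 m * pochhammer u2 m * pochhammer u3 m * pochhammer u4 m
             / (pochhammer l1 m * pochhammer l2 m * pochhammer l3 m) / fact m) \<le> K^m" for m
  proof (induction m)
    case 0 show ?case by simp
  next
    case (Suc m)
    have fs: "fact (Suc m) = (of_nat m + 1) * (fact m :: complex)" by (simp add: fact_Suc)
    have "pochhammer u1 (Suc m) * pochhammer u2 (Suc m) * pochhammer u3 (Suc m) * pochhammer u4 (Suc m)
             / (pochhammer l1 (Suc m) * pochhammer l2 (Suc m) * pochhammer l3 (Suc m)) / fact (Suc m)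
        = (pochhammer u1 m * pochhammer u2 m * pochhammer u3 m * pochhammer u4 m
             / (pochhammer l1 m * pochhammer l2 m * pochhammer l3 m) / fact m)
          * ((u1 + of_nat m) * (u2 + of_nat m) * (u3 + of_nat m) * (u4 + of_nat m)
      / ((l1 + of_nat m) * (l2 + of_nat m) * (l3 + of_nat m) * (of_nat m + 1)))"
      unfolding pochhammer_Suc fs by (rule ring4)
    hence "norm (pochhammer u1 (Suc m) * pochhammer u2 (Suc m) * pochhammer u3 (Suc m) * pochhammer u4 (Suc m)
             / (pochhammer l1 (Suc m) * pochhammer l2 (Suc m) * pochhammer l3 (Suc m)) / fact (Suc m))
        \<le> K^m * K"
      using Kpos by (simp only: norm_mult) (intro mult_mono Suc.IH R, auto)
    thus ?case by (simp add: mult.commute)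
  qed
  thus ?thesis using Kpos by blast
qed




lemma ring5:
  fixes t u x p v f :: complex
  shows "t * (u * x)^m * (p * (v * x)^n / f) = (t * u^m * (p * v^n / f)) * x^(m+n)"
  by (simp add: power_mult_distrib power_add mult_ac divide_inverse)

lemma ring6:
  fixes p1 p2 p3 p4 q1 q2 q3 z f :: complex
  shows "p1 * (p2 * (p3 * p4)) / (q1 * (q2 * q3)) * z / f = p1 * p2 * p3 * p4 / (q1 * q2 * q3) / f * z"
  by (simp add: divide_inverse mult_ac)

lemma core:
  fixes k :: nat and a b d x :: complex and K :: real
  defines "B1 \<equiv> 3/4 + of_nat k / 2 + a/2 + b/2" and "B2 \<equiv> 3/4 + of_nat k / 2 + a/2 - b/2"
  defines "T \<equiv> \<lambda>m. pochhammer (a/3) m * pochhammer (1/3 + a/3) m * pochhammer (2/3 + a/3) m * pochhammer (of_nat k + d) m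
            / (pochhammer B1 m * pochhammer B2 m * pochhammer d m) / fact m"
  defines "c \<equiv> \<lambda>n. pochhammer a n * pochhammer (1/2 - of_nat k - b) n * pochhammer (1/2 - of_nat k + b) n
                 / (fact n * pochhammer B1 n * pochhammer B2 n) * Q3 k n a b d * x ^ n"
  defines "z \<equiv> - 27 * x / (1 - 4*x) ^ 3"
  assumes gen1: "\<And>m::nat. B1 \<noteq> - of_nat m" and gen2: "\<And>m::nat. B2 \<noteq> - of_nat m" and gen3: "\<And>m::nat. d \<noteq> - of_nat m"
    and gen4: "pochhammer (1/2 + b) k \<noteq> 0" and gen5: "pochhammer (1/2 - b) k \<noteq> 0"
    and TK: "\<And>m. norm (T m) \<le> K^m" and Kpos: "K > 0"
    and x1: "norm x < 1/8" and x2: "216 * K * norm x < 1"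
  shows "summable (hyp_term [a/3, 1/3 + a/3, 2/3 + a/3, of_nat k + d] [B1, B2, d] z) \<and> summable c \<and>
        hypergeom [a/3, 1/3 + a/3, 2/3 + a/3, of_nat k + d] [B1, B2, d] z = (1 - 4*x) powr a * (\<Sum>n. c n)"
proof -
  define w where "w = 1 - 4*x"
  define M where "M = nat \<lceil>norm a\<rceil> + 1"
  define G where "G = (\<lambda>(m,i). T m * ((-27) * x)^m * (pochhammer (a + of_nat (3*m)) i * (4*x)^i / fact i))"
  define H where "H = (\<lambda>(m::nat,i::nat). 2^M * (216*K*norm x)^m * (8*norm x)^i)"
  have w0: "w \<noteq> 0"
  proof
    assume "w = 0"
    hence "4*x = 1" by (simp add: w_def)
    hence "norm (4*x) = 1" by simp
    thus False using x1 by (simp add: norm_mult)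
  qed
  have M1: "1 \<le> M" by (simp add: M_def)
  have Ma: "norm a \<le> real M" unfolding M_def by linarith
  have nx: "norm x \<ge> 0" by simp
  have bnd: "norm (G (m,i)) \<le> H (m,i)" for m i
  proof -
    have p1: "norm (pochhammer (a + of_nat (3*m)) i) \<le> pochhammer (real (M + 3*m)) i"
    proof -
      have "norm (pochhammer (a + of_nat (3*m)) i) \<le> pochhammer (norm (a + of_nat (3*m))) i" by (rule norm_poch_le)
      also have "\<dots> \<le> pochhammer (real (M + 3*m)) i"
      proof (rule poch_mono_real)
        have "norm (a + of_nat (3*m)) \<le> norm a + norm (of_nat (3*m) :: complex)" by (rule norm_triangle_ineq)
        thus "norm (a + of_nat (3*m)) \<le> real (M + 3*m)" using Ma by simp
      qed simp
      finally show ?thesis .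
    qed
    have p2: "norm (pochhammer (a + of_nat (3*m)) i) / fact i \<le> 2^M * 8^m * 2^i"
    proof -
      have "norm (pochhammer (a + of_nat (3*m)) i) \<le> 2^(M + 3*m + i) * fact i"
        using p1 poch_nat_bound[of "M + 3*m" i] M1 by simp
      also have "(2::real)^(M + 3*m + i) = 2^M * 8^m * 2^i" by (simp add: power_add power_mult)
      finally show ?thesis by (simp add: divide_le_eq mult_ac)
    qed
    have "norm (G (m,i)) = norm (T m) * (27 * norm x)^m * (norm (pochhammer (a + of_nat (3*m)) i) / fact i) * (4 * norm x)^i"
      by (simp add: G_def norm_mult norm_divide norm_power)
    also have "\<dots> \<le> K^m * (27 * norm x)^m * (2^M * 8^m * 2^i) * (4 * norm x)^i"
      by (intro mult_mono TK p2) (auto simp: Kpos less_imp_le)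
    also have "\<dots> = 2^M * ((8*27)*K*norm x)^m * ((2*4)*norm x)^i" by (simp only: power_mult_distrib mult_ac)
    also have "\<dots> = H (m,i)" by (simp add: H_def)
    finally show ?thesis .
  qed
  have q1: "8 * norm x < 1" using x1 by simp
  have q2: "216 * K * norm x \<ge> 0" using Kpos by simp
  have Hrow: "((\<lambda>i. H (m,i)) has_sum (2^M * (216*K*norm x)^m / (1 - 8*norm x))) UNIV" for m
  proof -
    have "(\<lambda>i. (8*norm x)^i) sums (1 / (1 - 8*norm x))" using geometric_sums[of "8*norm x"] q1 by simp
    hence "(\<lambda>i. 2^M * (216*K*norm x)^m * (8*norm x)^i) sums (2^M * (216*K*norm x)^m * (1 / (1 - 8*norm x)))"
      by (rule sums_mult)
    hence "(\<lambda>i. H (m,i)) sums (2^M * (216*K*norm x)^m / (1 - 8*norm x))" by (simp add: H_def)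
    thus ?thesis by (rule sums_nonneg_imp_has_sum) (use q2 in \<open>simp add: H_def\<close>)
  qed
  have Hcol: "(\<lambda>m. 2^M * (216*K*norm x)^m / (1 - 8*norm x)) summable_on UNIV"
  proof -
    have "(\<lambda>m. (216*K*norm x)^m) sums (1 / (1 - 216*K*norm x))" using geometric_sums[of "216*K*norm x"] x2 q2 by simp
    hence "(\<lambda>m. (216*K*norm x)^m * (2^M / (1 - 8*norm x))) sums (1 / (1 - 216*K*norm x) * (2^M / (1 - 8*norm x)))"
      by (rule sums_mult2)
    hence "((\<lambda>m. (216*K*norm x)^m * (2^M / (1 - 8*norm x))) has_sum (1 / (1 - 216*K*norm x) * (2^M / (1 - 8*norm x)))) UNIV"
      by (rule sums_nonneg_imp_has_sum) (use q1 q2 in simp)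
    hence "(\<lambda>m. (216*K*norm x)^m * (2^M / (1 - 8*norm x))) summable_on UNIV" by (rule has_sum_imp_summable)
    thus ?thesis by (simp add: mult_ac)
  qed
  have Hsum: "H summable_on (UNIV \<times> UNIV)"
    by (rule summable_on_SigmaI[OF Hrow Hcol]) (use q2 in \<open>simp add: H_def\<close>)
  hence Hsum': "H summable_on UNIV" by simp
  have "(\<lambda>p. norm (G p)) summable_on UNIV"
    by (rule Infinite_Sum.abs_summable_on_comparison_test'[OF Hsum']) (use bnd in auto)
  hence Gsum: "G summable_on UNIV" using summable_on_iff_abs_summable_on_complex by blast
  define Tot where "Tot = infsum G UNIV"
  have GT: "(G has_sum Tot) UNIV" using Gsum by (simp add: Tot_def)
  have inner: "((\<lambda>i. G (m,i)) has_sum (T m * ((-27) * x)^m * w powr (-a - of_nat (3*m)))) UNIV" for m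
  proof -
    have nx4: "norm (-4*x) < 1" using x1 by (simp add: norm_mult)
    have gb: "(\<lambda>n. ((-a - of_nat (3*m)) gchoose n) * (-4*x)^n) sums (1 + (-4*x)) powr (-a - of_nat (3*m))"
      by (rule gen_binomial_complex[OF nx4])
    have te: "((-a - of_nat (3*m)) gchoose n) * (-4*x)^n = pochhammer (a + of_nat (3*m)) n * (4*x)^n / fact n" for n
    proof -
      have "((-a - of_nat (3*m)) gchoose n) = (-1)^n * pochhammer (a + of_nat (3*m)) n / fact n"
        using gbinomial_pochhammer[of "-a - of_nat (3*m)" n] by (simp add: add.commute)
      moreover have "(-1::complex)^n * (-4*x)^n = (4*x)^n"
      proof -
        have "(-1::complex)^n * (-4*x)^n = ((-1) * (-4*x))^n" by (rule power_mult_distrib[symmetric])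
        also have "(-1) * (-4*x) = 4*x" by simp
        finally show ?thesis .
      qed
      ultimately show ?thesis by (simp add: mult_ac)
    qed
    have "(\<lambda>n. pochhammer (a + of_nat (3*m)) n * (4*x)^n / fact n) sums (w powr (-a - of_nat (3*m)))"
    proof -
      have "1 + (-4*x) = w" by (simp add: w_def)
      thus ?thesis using gb unfolding te by simp
    qed
    hence "(\<lambda>i. T m * ((-27) * x)^m * (pochhammer (a + of_nat (3*m)) i * (4*x)^i / fact i)) sums (T m * ((-27) * x)^m * w powr (-a - of_nat (3*m)))"
      by (rule sums_mult)
    hence s: "(\<lambda>i. G (m,i)) sums (T m * ((-27) * x)^m * w powr (-a - of_nat (3*m)))" by (simp add: G_def)
    have "summable (\<lambda>i. H (m,i))" using Hrow[of m] has_sum_imp_sums sums_summable by blast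
    hence "summable (\<lambda>i. norm (G (m,i)))"
      by (rule summable_comparison_test'[where N = 0]) (use bnd in simp)
    thus ?thesis using s by (rule norm_summable_imp_has_sum)
  qed
  have outer: "((\<lambda>m. T m * ((-27) * x)^m * w powr (-a - of_nat (3*m))) has_sum Tot) UNIV"
    by (rule has_sum_Sigma'[OF _ inner]) (use GT in simp)
  define W where "W = w powr (-a)"
  have W0: "W \<noteq> 0" using w0 by (simp add: W_def)
  have hyp: "hyp_term [a/3, 1/3 + a/3, 2/3 + a/3, of_nat k + d] [B1, B2, d] z m * W = T m * ((-27) * x)^m * w powr (-a - of_nat (3*m))" for m
  proof -
    have h1: "hyp_term [a/3, 1/3 + a/3, 2/3 + a/3, of_nat k + d] [B1, B2, d] z m = T m * z^m"
      unfolding hyp_term_def T_def by (simp add: mult.assoc)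
    have hz: "z = ((-27) * x) / w^3" unfolding z_def w_def by simp
    have h2: "z^m = ((-27) * x)^m / w^(3*m)" unfolding hz power_divide power_mult ..
    have h3: "w powr (-a - of_nat (3*m)) = W / w^(3*m)"
      unfolding W_def powr_diff using powr_nat'[of w "3*m"] w0 by simp
    show ?thesis unfolding h1 h2 h3 by (simp add: divide_inverse mult_ac)
  qed
  have "(\<lambda>m. hyp_term [a/3, 1/3 + a/3, 2/3 + a/3, of_nat k + d] [B1, B2, d] z m * W) sums Tot"
    using has_sum_imp_sums[OF outer] unfolding hyp[symmetric] .
  hence "(\<lambda>m. hyp_term [a/3, 1/3 + a/3, 2/3 + a/3, of_nat k + d] [B1, B2, d] z m * W / W) sums (Tot / W)"
    by (rule sums_divide)
  hence hs: "hyp_term [a/3, 1/3 + a/3, 2/3 + a/3, of_nat k + d] [B1, B2, d] z sums (Tot / W)"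
    using W0 by simp
  have reidx: "((\<lambda>(N,m). G (m, N - m)) has_sum Tot) (Sigma UNIV (\<lambda>N. {..N})) = (G has_sum Tot) UNIV"
    by (rule has_sum_reindex_bij_witness[where j = "\<lambda>(N,m). (m, N - m)" and i = "\<lambda>(m,l). (m + l, m)"]) auto
  have cT: "((\<lambda>N. \<Sum>m\<le>N. G (m, N - m)) has_sum Tot) UNIV"
  proof (rule has_sum_Sigma')
    show "((\<lambda>(N,m). G (m, N - m)) has_sum Tot) (Sigma UNIV (\<lambda>N. {..N}))" using reidx GT by simp
  next
    fix N :: nat
    show "((\<lambda>m. (\<lambda>(N,m). G (m, N - m)) (N, m)) has_sum (\<Sum>m\<le>N. G (m, N - m))) {..N}"
      by (simp add: has_sum_finite)
  qed
  have cN: "(\<Sum>m\<le>N. G (m, N - m)) = c N" for N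
  proof -
    have "(\<Sum>m\<le>N. G (m, N - m)) = (\<Sum>m\<le>N. (T m * (-27)^m * (pochhammer (a + of_nat (3*m)) (N - m) * 4^(N - m) / fact (N - m))) * x^N)"
    proof (rule sum.cong[OF refl])
      fix m assume "m \<in> {..N}"
      hence mN: "m + (N - m) = N" by simp
      show "G (m, N - m) = (T m * (-27)^m * (pochhammer (a + of_nat (3*m)) (N - m) * 4^(N - m) / fact (N - m))) * x^N"
        unfolding G_def split ring5 mN ..
    qed
    also have "\<dots> = (\<Sum>m\<le>N. T m * (-27)^m * (pochhammer (a + of_nat (3*m)) (N - m) * 4^(N - m) / fact (N - m))) * x^N"
      by (rule sum_distrib_right[symmetric])
    also have "(\<Sum>m\<le>N. T m * (-27)^m * (pochhammer (a + of_nat (3*m)) (N - m) * 4^(N - m) / fact (N - m)))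
        = pochhammer a N * pochhammer (1/2 - of_nat k - b) N * pochhammer (1/2 - of_nat k + b) N
        / (fact N * pochhammer B1 N * pochhammer B2 N) * Q3 k N a b d"
      unfolding T_def B1_def B2_def by (rule coef[OF gen1[unfolded B1_def] gen2[unfolded B2_def] gen3 gen4 gen5])
    finally show ?thesis by (simp add: c_def)
  qed
  have cs: "c sums Tot" using has_sum_imp_sums[OF cT] unfolding cN .
  have "hypergeom [a/3, 1/3 + a/3, 2/3 + a/3, of_nat k + d] [B1, B2, d] z = Tot / W"
    unfolding hypergeom_def using hs by (rule sums_unique[symmetric])
  also have "\<dots> = (1 - 4*x) powr a * (\<Sum>n. c n)"
    unfolding W_def w_def powr_minus sums_unique[OF cs, symmetric] by (simp add: divide_inverse mult_ac)
  finally show ?thesis using hs cs by (auto simp: sums_summable)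
qed



theorem theorem5:
  fixes k :: nat and a b d :: complex
  assumes gen1: "\<And>m::nat. 3/4 + of_nat k / 2 + a/2 + b/2 \<noteq> - of_nat m"
      and gen2: "\<And>m::nat. 3/4 + of_nat k / 2 + a/2 - b/2 \<noteq> - of_nat m"
      and gen3: "\<And>m::nat. d \<noteq> - of_nat m"
      and gen4: "pochhammer (1/2 + b) k \<noteq> 0"
      and gen5: "pochhammer (1/2 - b) k \<noteq> 0"
  shows "\<exists>r>0. \<forall>x::complex. norm x < r \<longrightarrow>
    (let B1 = 3/4 + of_nat k / 2 + a/2 + b/2; B2 = 3/4 + of_nat k / 2 + a/2 - b/2;
         ups = [a/3, 1/3 + a/3, 2/3 + a/3, of_nat k + d]; lows = [B1, B2, d];
         z = - 27 * x / (1 - 4*x) ^ 3;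
         c = (\<lambda>n. pochhammer a n * pochhammer (1/2 - of_nat k - b) n * pochhammer (1/2 - of_nat k + b) n
                 / (fact n * pochhammer B1 n * pochhammer B2 n) * Q3 k n a b d * x ^ n)
     in summable (hyp_term ups lows z) \<and> summable c \<and>
        hypergeom ups lows z = (1 - 4*x) powr a * (\<Sum>n. c n))"
proof -
  obtain K where Kpos: "K > 0" and TK: "\<forall>m. norm (pochhammer (a/3) m * pochhammer (1/3 + a/3) m * pochhammer (2/3 + a/3) m
      * pochhammer (of_nat k + d) m / (pochhammer (3/4 + of_nat k / 2 + a/2 + b/2) m * pochhammer (3/4 + of_nat k / 2 + a/2 - b/2) m
      * pochhammer d m) / fact m) \<le> K^m"
    using T_bound[OF gen1 gen2 gen3, of "a/3" "1/3 + a/3" "2/3 + a/3" "of_nat k + d"] by blast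
  define r where "r = min (1/8) (1 / (216*K))"
  have rpos: "r > 0" using Kpos by (simp add: r_def)
  have main: "summable (hyp_term [a/3, 1/3 + a/3, 2/3 + a/3, of_nat k + d] [3/4 + of_nat k / 2 + a/2 + b/2, 3/4 + of_nat k / 2 + a/2 - b/2, d] (- 27 * x / (1 - 4*x) ^ 3))
      \<and> summable (\<lambda>n. pochhammer a n * pochhammer (1/2 - of_nat k - b) n * pochhammer (1/2 - of_nat k + b) n
                 / (fact n * pochhammer (3/4 + of_nat k / 2 + a/2 + b/2) n * pochhammer (3/4 + of_nat k / 2 + a/2 - b/2) n) * Q3 k n a b d * x ^ n)
      \<and> hypergeom [a/3, 1/3 + a/3, 2/3 + a/3, of_nat k + d] [3/4 + of_nat k / 2 + a/2 + b/2, 3/4 + of_nat k / 2 + a/2 - b/2, d] (- 27 * x / (1 - 4*x) ^ 3)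
         = (1 - 4*x) powr a * (\<Sum>n. pochhammer a n * pochhammer (1/2 - of_nat k - b) n * pochhammer (1/2 - of_nat k + b) n
                 / (fact n * pochhammer (3/4 + of_nat k / 2 + a/2 + b/2) n * pochhammer (3/4 + of_nat k / 2 + a/2 - b/2) n) * Q3 k n a b d * x ^ n)"
    if xr: "norm x < r" for x :: complex
  proof -
    have x1: "norm x < 1/8" using xr by (simp add: r_def)
    have "norm x < 1 / (216*K)" using xr by (simp add: r_def)
    hence x2: "216 * K * norm x < 1" using Kpos by (simp add: field_simps)
    show ?thesis by (rule core) (use gen1 gen2 gen3 gen4 gen5 TK Kpos x1 x2 in auto)
  qed
  show ?thesis unfolding Let_def using rpos main by blast
qed

end
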